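(* Fix real numbers $\lambda>0$, $u$, $V$, $\alpha$. Let $c_1=-1$, $c_2=0$, $c_3=1$ and let $P_1=1$, $P_2=\lambda X$, $P_3=\lambda^2(3X^2-2)$. Let $\widehat P_1=1$ and let $\widehat P_2,\widehat P_3$ be real polynomials of degree at most $2$ such that the matrix $\widehat M=(\widehat P_k(c_j))_{1\le k,j\le 3}$ is invertible. Let $C$ be the (invertible) $3\times 3$ matrix with $\widehat M = CM$, where $M=(P_k(c_j))_{1\le k,j\le 3}$ (so the first row of $C$ is $(1,0,0)$). Let $T$ (resp. $\widehat T$) be the $3\times 3$ matrix defined by $P_k(c_j-u)=\sum_{l=1}^3 T_{k,l}P_l(c_j)$ (resp. $\widehat P_k(c_j-u)=\sum_{l=1}^3 \widehat T_{k,l}\widehat P_l(c_j)$) for all $1\le k,j\le 3$. Let $$E=\begin{pmatrix}1&0&0\\ V\lambda&0&0\\ \alpha\lambda^2&0&0\end{pmatrix},\qquad \widehat E = CE,$$ and for real $s,s'$ let $S=\widehat S=\mathrm{diag}(0,s,s')$. Define $$R=M^{-1}T^{-1}\bigl(I+S(TET^{-1}-I)\bigr)TM,\qquad \widehat R=\widehat M^{-1}\widehat T^{-1}\bigl(I+\widehat S(\widehat T\widehat E\widehat T^{-1}-I)\bigr)\widehat T\widehat M,$$ where $I$ is the $3\times3$ identity. Then $\widehat R=R$ for all $(s,s')\in\mathbb{R}^2$ if and only if $\widehat P_2\in\operatorname{span}(P_1,P_2)$ and $\widehat P_3\in\operatorname{span}(P_1,P_3)$ in $\mathbb{R}[X]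/\bigl(X(X-1)(X+1)\bigr)$.
   Context: This concerns the D1Q3 lattice Boltzmann scheme with relative velocity $u$: the moments of the distribution vector $F=(f_1,f_2,f_3)^T$ are $\sum_j P_k(c_j-u)f_j$, $k=1,2,3$; $M$ maps $F$ to the moments with $u=0$ and $T$ is the change of basis to the moments with relative velocity $u$; $E$ encodes the equilibrium values $\rho^{eq}=\rho$, $q^{eq}(0)=\lambda V\rho$, $\varepsilon^{eq}(0)=\lambda^2\alpha\rho$; $S$ contains the relaxation parameters; and $R$ is the matrix of the relaxation step $F^\star=RF$. The hatted objects describe the same scheme built from another choice of moment polynomials $(\widehat P_1,\widehat P_2,\widehat P_3)$ with the same first moment, the same equilibrium distributions and the same relaxation parameters. *)

theory Defs
  imports "HOL-Analysis.Analysis" "HOL-Computational_Algebra.Polynomial"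
begin

text \<open>Indices 1,2,3 are the three elements of the numeral type 3 (where 3 = 0).\<close>

definition vel :: "3 \<Rightarrow> real" where
  "vel j = (if j = 1 then -1 else if j = 2 then 0 else 1)"

definition Pstd :: "real \<Rightarrow> 3 \<Rightarrow> real poly" where
  "Pstd lam k = (if k = 1 then 1 else if k = 2 then [:0, lam:]
                 else smult (lam^2) [:-2, 0, 3:])"

definition Phat :: "real poly \<Rightarrow> real poly \<Rightarrow> 3 \<Rightarrow> real poly" where
  "Phat P2 P3 k = (if k = 1 then 1 else if k = 2 then P2 else P3)"

definition momat :: "(3 \<Rightarrow> real poly) \<Rightarrow> real \<Rightarrow> real^3^3" where
  "momat P u = (\<chi> k j. poly (P k) (vel j - u))"

definition Eq_mat :: "real \<Rightarrow> real \<Rightarrow> real \<Rightarrow> real^3^3" where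
  "Eq_mat lam V alpha = (\<chi> k l. if l = 1 then
      (if k = 1 then 1 else if k = 2 then V * lam else alpha * lam^2) else 0)"

definition S_mat :: "real \<Rightarrow> real \<Rightarrow> real^3^3" where
  "S_mat s s' = (\<chi> k l. if k = l then
      (if k = 1 then 0 else if k = 2 then s else s') else 0)"

definition relax :: "real^3^3 \<Rightarrow> real^3^3 \<Rightarrow> real^3^3 \<Rightarrow> real^3^3 \<Rightarrow> real^3^3" where
  "relax M T E S = matrix_inv M ** matrix_inv T **
     (mat 1 + S ** (T ** E ** matrix_inv T - mat 1)) ** T ** M"

end

theory Submission imports Defs begin

definition mk3 :: "real \<Rightarrow> real \<Rightarrow> real \<Rightarrow> real \<Rightarrow> real \<Rightarrow> real \<Rightarrow> real \<Rightarrow> real \<Rightarrow> real \<Rightarrow> real^3^3" where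
 "mk3 a b c d e f g h i = (\<chi> r s. if r = 1 then (if s = 1 then a else if s = 2 then b else c)
   else if r = 2 then (if s = 1 then d else if s = 2 then e else f)
   else (if s = 1 then g else if s = 2 then h else i))"

lemma mk3_mult: "mk3 a b c d e f g h i ** mk3 a' b' c' d' e' f' g' h' i' =
  mk3 (a*a'+b*d'+c*g') (a*b'+b*e'+c*h') (a*c'+b*f'+c*i')
      (d*a'+e*d'+f*g') (d*b'+e*e'+f*h') (d*c'+e*f'+f*i')
      (g*a'+h*d'+i*g') (g*b'+h*e'+i*h') (g*c'+h*f'+i*i')"
  by (simp add: mk3_def matrix_matrix_mult_def sum_3 vec_eq_iff forall_3)

lemma mk3_eq: "mk3 a b c d e f g h i = mk3 a' b' c' d' e' f' g' h' i' \<longleftrightarrow>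
  a=a' \<and> b=b' \<and> c=c' \<and> d=d' \<and> e=e' \<and> f=f' \<and> g=g' \<and> h=h' \<and> i=i'"
  by (simp add: mk3_def vec_eq_iff forall_3)

lemma mk3_diff: "mk3 a b c d e f g h i - mk3 a' b' c' d' e' f' g' h' i' =
  mk3 (a-a') (b-b') (c-c') (d-d') (e-e') (f-f') (g-g') (h-h') (i-i')"
  by (simp add: mk3_def vec_eq_iff forall_3)

lemma mat1_mk3: "(mat 1 :: real^3^3) = mk3 1 0 0 0 1 0 0 0 1"
  by (simp add: mk3_def vec_eq_iff forall_3 mat_def)

lemma E_mk3: "Eq_mat lam V alpha = mk3 1 0 0 (V*lam) 0 0 (alpha*lam^2) 0 0"
  by (simp add: mk3_def vec_eq_iff forall_3 Eq_mat_def)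

lemma S_mk3: "S_mat s s' = mk3 0 0 0 0 s 0 0 0 s'"
  by (simp add: mk3_def vec_eq_iff forall_3 S_mat_def)

lemma M_mk3: "momat (Pstd lam) u = mk3 1 1 1 (lam*(-1-u)) (lam*(-u)) (lam*(1-u))
   (lam^2*(3*(-1-u)^2-2)) (lam^2*(3*u^2-2)) (lam^2*(3*(1-u)^2-2))"
  by (simp add: momat_def mk3_def vec_eq_iff forall_3 vel_def Pstd_def algebra_simps power2_eq_square)

lemma Mh_mk3: "momat (Phat [:p0,p1,p2:] [:q0,q1,q2:]) u = mk3 1 1 1
   (p0 + p1*(-1-u) + p2*(-1-u)^2) (p0 + p1*(-u) + p2*u^2) (p0 + p1*(1-u) + p2*(1-u)^2)
   (q0 + q1*(-1-u) + q2*(-1-u)^2) (q0 + q1*(-u) + q2*u^2) (q0 + q1*(1-u) + q2*(1-u)^2)"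
  by (simp add: momat_def mk3_def vec_eq_iff forall_3 vel_def Phat_def algebra_simps power2_eq_square)

lemma deg2: "degree (p::real poly) \<le> 2 \<Longrightarrow> p = [:coeff p 0, coeff p 1, coeff p 2:]"
  by (rule poly_eqI) (auto simp: coeff_pCons coeff_eq_0 split: nat.split simp add: numeral_2_eq_2)

lemma inv_r: "invertible (A::real^'n^'n) \<Longrightarrow> A ** matrix_inv A = mat 1"
  unfolding invertible_def matrix_inv_def by (rule someI2_ex) auto
lemma inv_l: "invertible (A::real^'n^'n) \<Longrightarrow> matrix_inv A ** A = mat 1"
  unfolding invertible_def matrix_inv_def by (rule someI2_ex) auto
lemma inv_r2: "invertible (A::real^'n^'n) \<Longrightarrow> X ** A ** matrix_inv A = X"
  by (metis inv_r matrix_mul_assoc matrix_mul_rid)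
lemma inv_l2: "invertible (A::real^'n^'n) \<Longrightarrow> X ** matrix_inv A ** A = X"
  by (metis inv_l matrix_mul_assoc matrix_mul_rid)

lemma mdiff_l: "(A::real^'n^'n) ** (B - C) = A ** B - A ** C"
  by (simp add: matrix_matrix_mult_def vec_eq_iff sum_subtractf algebra_simps)
lemma mdiff_r: "((B::real^'n^'n) - C) ** A = B ** A - C ** A"
  by (simp add: matrix_matrix_mult_def vec_eq_iff sum_subtractf algebra_simps)
lemma madd_r: "((B::real^'n^'n) + C) ** A = B ** A + C ** A"
  by (simp add: matrix_matrix_mult_def vec_eq_iff sum.distrib algebra_simps)

lemma relax_eq:
  assumes "invertible (M::real^3^3)" "invertible T"
  shows "relax M T E S = mat 1 + matrix_inv M ** matrix_inv T ** S ** T ** (E - mat 1) ** M"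
proof -
  have "(mat 1 + S ** (T ** E ** matrix_inv T - mat 1)) ** T = T + S ** T ** (E - mat 1)"
    by (simp add: madd_r mdiff_l mdiff_r matrix_mul_assoc inv_l2 assms)
  hence "relax M T E S = matrix_inv M ** matrix_inv T ** (T + S ** T ** (E - mat 1)) ** M"
    unfolding relax_def by (metis matrix_mul_assoc)
  also have "\<dots> = mat 1 + matrix_inv M ** matrix_inv T ** S ** T ** (E - mat 1) ** M"
    by (simp add: madd_r matrix_add_ldistrib matrix_mul_assoc inv_l inv_l2 assms)
  finally show ?thesis .
qed

lemma lcancel: "invertible (A::real^'n^'n) \<Longrightarrow> (A ** X = A ** Y) \<longleftrightarrow> X = Y"
  by (metis inv_l matrix_mul_assoc matrix_mul_lid)
lemma rcancel: "invertible (A::real^'n^'n) \<Longrightarrow> (X ** A = Y ** A) \<longleftrightarrow> X = Y"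
  by (metis inv_r2)


lemma main_mat:
  fixes lam u V alpha p0 p1 p2 q0 q1 q2 :: real and C T Th :: "real^3^3"
  assumes lam: "lam > 0"
    and invh: "invertible (momat (Phat [:p0,p1,p2:] [:q0,q1,q2:]) 0)"
    and hC: "momat (Phat [:p0,p1,p2:] [:q0,q1,q2:]) 0 = C ** momat (Pstd lam) 0"
    and hT: "momat (Pstd lam) u = T ** momat (Pstd lam) 0"
    and hTh: "momat (Phat [:p0,p1,p2:] [:q0,q1,q2:]) u = Th ** momat (Phat [:p0,p1,p2:] [:q0,q1,q2:]) 0"
  shows "(\<forall>s s'. relax (momat (Phat [:p0,p1,p2:] [:q0,q1,q2:]) 0) Th (C ** Eq_mat lam V alpha) (S_mat s s')
                = relax (momat (Pstd lam) 0) T (Eq_mat lam V alpha) (S_mat s s'))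
     \<longleftrightarrow> p2 = 0 \<and> q1 = 0"
proof -
  define M0 where "M0 = momat (Pstd lam) 0"
  define Mh where "Mh = momat (Phat [:p0,p1,p2:] [:q0,q1,q2:]) 0"
  define E where "E = Eq_mat lam V alpha"
  define Mi where "Mi = mk3 (1/3) (-1/(2*lam)) (1/(6*lam^2)) (1/3) 0 (-1/(3*lam^2)) (1/3) (1/(2*lam)) (1/(6*lam^2))"
  define Tx where "Tx = mk3 1 0 0 (-lam*u) 1 0 (3*lam^2*u^2) (-6*lam*u) 1"
  define Txi where "Txi = mk3 1 0 0 (lam*u) 1 0 (3*lam^2*u^2) (6*lam*u) 1"
  define Cx where "Cx = mk3 1 0 0 (p0+2*p2/3) (p1/lam) (p2/(3*lam^2)) (q0+2*q2/3) (q1/lam) (q2/(3*lam^2))"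
  have lam0: "lam \<noteq> 0" using lam by simp
  have M0Mi: "M0 ** Mi = mat 1"
    unfolding M0_def Mi_def M_mk3 mat1_mk3 mk3_mult mk3_eq using lam0
    by (simp add: field_simps power2_eq_square)
  have MiM0: "Mi ** M0 = mat 1"
    unfolding M0_def Mi_def M_mk3 mat1_mk3 mk3_mult mk3_eq using lam0
    by (simp add: field_simps power2_eq_square)
  have invM0: "invertible M0" using M0Mi MiM0 invertible_def by blast
  have TxTxi: "Tx ** Txi = mat 1" "Txi ** Tx = mat 1"
    unfolding Tx_def Txi_def mat1_mk3 mk3_mult mk3_eq by (simp_all add: algebra_simps power2_eq_square)
  hence invTx: "invertible Tx" using invertible_def by blast
  have CxMu: "\<And>v. Cx ** momat (Pstd lam) v = momat (Phat [:p0,p1,p2:] [:q0,q1,q2:]) v"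
    unfolding Cx_def M_mk3 Mh_mk3 mk3_mult mk3_eq using lam0
    by (simp add: field_simps power2_eq_square)
  have TxM: "momat (Pstd lam) u = Tx ** M0"
    unfolding Tx_def M0_def M_mk3 mk3_mult mk3_eq
    by (simp add: algebra_simps power2_eq_square)
  have TTx: "T = Tx" using hT TxM rcancel[OF invM0] M0_def by metis
  have CCx: "C = Cx" using hC CxMu[of 0] rcancel[OF invM0] M0_def by metis
  have MhC: "Mh = Cx ** M0" using CxMu[of 0] M0_def Mh_def by simp
  have invMh: "invertible Mh" using invh Mh_def by simp
  have "Cx ** (M0 ** matrix_inv Mh) = mat 1"
    using MhC inv_r[OF invMh] by (simp add: matrix_mul_assoc)
  hence invCx: "invertible Cx" using invertible_right_inverse by blast
  have "Th ** Cx ** M0 = Cx ** Tx ** M0"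
    using hTh CxMu[of u] TxM MhC Mh_def by (simp add: matrix_mul_assoc)
  hence ThCx: "Th ** Cx = Cx ** Tx" using rcancel[OF invM0] by blast
  hence "Th = Cx ** Tx ** matrix_inv Cx" using inv_r2[OF invCx] by metis
  moreover have "invertible (matrix_inv Cx)"
    using inv_l[OF invCx] inv_r[OF invCx] invertible_def by blast
  ultimately have invTh: "invertible Th" using invertible_mult invCx invTx by metis
  have ECx: "E ** Cx = E"
    unfolding E_def E_mk3 Cx_def mk3_mult mk3_eq by simp
  have invA: "invertible (Th ** Mh)" using invertible_mult invTh invMh by blast
  have step: "\<And>S. relax Mh Th (Cx ** E) S = relax M0 Tx E S \<longleftrightarrow>
      S ** Cx ** Tx ** (E - mat 1) = Cx ** S ** Tx ** (E - mat 1)"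
  proof -
    fix S :: "real^3^3"
    have h1: "Th ** Mh ** (matrix_inv Mh ** matrix_inv Th ** S ** Th ** (Cx ** E - mat 1) ** Mh)
       = S ** Th ** (Cx ** E - mat 1) ** Mh"
      by (simp add: matrix_mul_assoc inv_r2 inv_r invMh invTh)
    have "(Cx ** E - mat 1) ** Mh = Cx ** (E - mat 1) ** M0"
      unfolding MhC by (simp add: mdiff_r mdiff_l matrix_mul_assoc[symmetric]) (simp add: matrix_mul_assoc ECx)
    hence h2: "S ** Th ** (Cx ** E - mat 1) ** Mh = S ** Cx ** Tx ** (E - mat 1) ** M0"
      by (simp add: matrix_mul_assoc[symmetric]) (simp add: matrix_mul_assoc ThCx)
    have h3: "Th ** Mh ** (matrix_inv M0 ** matrix_inv Tx ** S ** Tx ** (E - mat 1) ** M0)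
      = Cx ** S ** Tx ** (E - mat 1) ** M0"
      unfolding MhC by (simp add: matrix_mul_assoc ThCx inv_r2 invM0 invTx)
    have "relax Mh Th (Cx ** E) S = relax M0 Tx E S \<longleftrightarrow>
       matrix_inv Mh ** matrix_inv Th ** S ** Th ** (Cx ** E - mat 1) ** Mh
       = matrix_inv M0 ** matrix_inv Tx ** S ** Tx ** (E - mat 1) ** M0"
      by (simp add: relax_eq invMh invTh invM0 invTx)
    also have "\<dots> \<longleftrightarrow> S ** Cx ** Tx ** (E - mat 1) ** M0 = Cx ** S ** Tx ** (E - mat 1) ** M0"
      using lcancel[OF invA] h1 h2 h3 by metis
    also have "\<dots> \<longleftrightarrow> S ** Cx ** Tx ** (E - mat 1) = Cx ** S ** Tx ** (E - mat 1)"
      using rcancel[OF invM0] by blast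
    finally show "?thesis S" .
  qed
  have fin: "(\<forall>s s'. S_mat s s' ** Cx ** Tx ** (E - mat 1) = Cx ** S_mat s s' ** Tx ** (E - mat 1))
     \<longleftrightarrow> p2 = 0 \<and> q1 = 0"
  proof
    assume "\<forall>s s'. S_mat s s' ** Cx ** Tx ** (E - mat 1) = Cx ** S_mat s s' ** Tx ** (E - mat 1)"
    hence "S_mat 1 0 ** Cx ** Tx ** (E - mat 1) = Cx ** S_mat 1 0 ** Tx ** (E - mat 1)" by blast
    thus "p2 = 0 \<and> q1 = 0"
      unfolding S_mk3 Cx_def Tx_def E_def E_mk3 mat1_mk3 mk3_diff mk3_mult mk3_eq using lam0
      by (simp add: field_simps)
  next
    assume "p2 = 0 \<and> q1 = 0"
    thus "\<forall>s s'. S_mat s s' ** Cx ** Tx ** (E - mat 1) = Cx ** S_mat s s' ** Tx ** (E - mat 1)"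
      unfolding S_mk3 Cx_def Tx_def E_def E_mk3 mat1_mk3 mk3_diff mk3_mult mk3_eq using lam0
      by (simp add: field_simps)
  qed
  show ?thesis
    using step fin unfolding TTx CCx M0_def[symmetric] Mh_def[symmetric] E_def[symmetric] by simp
qed


lemma poly_side2:
  fixes lam p0 p1 p2 :: real assumes lam: "lam > 0"
  shows "(\<exists>a b. ([:0,1:] * [:-1,1:] * [:1,1:]) dvd
               ([:p0,p1,p2:] - (smult a (Pstd lam 1) + smult b (Pstd lam 2)))) \<longleftrightarrow> p2 = 0"
proof
  assume "\<exists>a b. ([:0,1:] * [:-1,1:] * [:1,1:]) dvd
               ([:p0,p1,p2:] - (smult a (Pstd lam 1) + smult b (Pstd lam 2)))"
  then obtain a b k where hk: "[:p0,p1,p2:] - (smult a (Pstd lam 1) + smult b (Pstd lam 2))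
      = [:0,1:] * [:-1,1:] * [:1,1:] * k" by (auto elim: dvdE)
  have h: "\<And>x. x \<in> {-1,0,1::real} \<Longrightarrow> poly ([:p0,p1,p2:] - (smult a (Pstd lam 1) + smult b (Pstd lam 2))) x = 0"
    unfolding hk by auto
  have "p0 - p1 + p2 - a + b*lam = 0" "p0 - a = 0" "p0 + p1 + p2 - a - b*lam = 0"
    using h[of "-1"] h[of 0] h[of 1] by (auto simp: Pstd_def algebra_simps)
  thus "p2 = 0" by linarith
next
  assume "p2 = 0"
  hence "[:p0,p1,p2:] - (smult p0 (Pstd lam 1) + smult (p1/lam) (Pstd lam 2)) = 0"
    using lam by (simp add: Pstd_def)
  thus "\<exists>a b. ([:0,1:] * [:-1,1:] * [:1,1:]) dvd
               ([:p0,p1,p2:] - (smult a (Pstd lam 1) + smult b (Pstd lam 2)))"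
    by (metis dvd_0_right)
qed

lemma poly_side3:
  fixes lam q0 q1 q2 :: real assumes lam: "lam > 0"
  shows "(\<exists>a b. ([:0,1:] * [:-1,1:] * [:1,1:]) dvd
               ([:q0,q1,q2:] - (smult a (Pstd lam 1) + smult b (Pstd lam 3)))) \<longleftrightarrow> q1 = 0"
proof
  assume "\<exists>a b. ([:0,1:] * [:-1,1:] * [:1,1:]) dvd
               ([:q0,q1,q2:] - (smult a (Pstd lam 1) + smult b (Pstd lam 3)))"
  then obtain a b k where hk: "[:q0,q1,q2:] - (smult a (Pstd lam 1) + smult b (Pstd lam 3))
      = [:0,1:] * [:-1,1:] * [:1,1:] * k" by (auto elim: dvdE)
  have h: "\<And>x. x \<in> {-1,1::real} \<Longrightarrow> poly ([:q0,q1,q2:] - (smult a (Pstd lam 1) + smult b (Pstd lam 3))) x = 0"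
    unfolding hk by auto
  have "q0 - q1 + q2 - a - b*lam^2 = 0" "q0 + q1 + q2 - a - b*lam^2 = 0"
    using h[of "-1"] h[of 1] by (auto simp: Pstd_def algebra_simps)
  thus "q1 = 0" by linarith
next
  assume q: "q1 = 0"
  have "[:q0,q1,q2:] - (smult (q0 + 2*q2/3) (Pstd lam 1) + smult (q2/(3*lam^2)) (Pstd lam 3)) = 0"
    using lam q by (simp add: Pstd_def)
  thus "\<exists>a b. ([:0,1:] * [:-1,1:] * [:1,1:]) dvd
               ([:q0,q1,q2:] - (smult a (Pstd lam 1) + smult b (Pstd lam 3)))"
    by (metis dvd_0_right)
qed

theorem proposition1:
  fixes lam u V alpha :: real and P2h P3h :: "real poly"
    and C T Th :: "real^3^3"
  assumes "lam > 0"
    and "degree P2h \<le> 2" and "degree P3h \<le> 2"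
    and "invertible (momat (Phat P2h P3h) 0)"
    and "momat (Phat P2h P3h) 0 = C ** momat (Pstd lam) 0"
    and "momat (Pstd lam) u = T ** momat (Pstd lam) 0"
    and "momat (Phat P2h P3h) u = Th ** momat (Phat P2h P3h) 0"
  shows "(\<forall>s s'. relax (momat (Phat P2h P3h) 0) Th (C ** Eq_mat lam V alpha) (S_mat s s')
                = relax (momat (Pstd lam) 0) T (Eq_mat lam V alpha) (S_mat s s'))
     \<longleftrightarrow>
     ((\<exists>a b. ([:0,1:] * [:-1,1:] * [:1,1:]) dvd
               (P2h - (smult a (Pstd lam 1) + smult b (Pstd lam 2)))) \<and>
      (\<exists>a b. ([:0,1:] * [:-1,1:] * [:1,1:]) dvd
               (P3h - (smult a (Pstd lam 1) + smult b (Pstd lam 3)))))"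
proof -
  obtain p0 p1 p2 where P2: "P2h = [:p0,p1,p2:]" using deg2[OF assms(2)] by blast
  obtain q0 q1 q2 where P3: "P3h = [:q0,q1,q2:]" using deg2[OF assms(3)] by blast
  show ?thesis
    using main_mat[of lam p0 p1 p2 q0 q1 q2 C u T Th V alpha] assms
      poly_side2[OF assms(1), of p0 p1 p2] poly_side3[OF assms(1), of q0 q1 q2]
    unfolding P2 P3 by simp
qed

end
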